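(* Let $\epsilon=\exp\!\left(-\frac{1}{\sigma^2}(\|u_T\|_\infty+\|f\|_\infty T)\right)$ and define $\widehat\psi^0=0\in\mathcal{M}$, $\widehat\phi^{n+\frac12}=\widehat\Phi(\widehat\psi^n)$, $\widehat\psi^{n+1}=\widehat\Psi(\widehat\phi^{n+\frac12})$ for $n\in\mathbb{N}$. Then: (i) $(\widehat\phi^{n+\frac12})_n$ is an entrywise nonincreasing sequence in $\mathcal{M}_\epsilon$; (ii) $(\widehat\psi^n)_n$ is an entrywise nondecreasing sequence in $\mathcal{M}_0$, bounded from above by $\frac{\|m_0\|_\infty}{\epsilon}$; (iii) $(\widehat\phi^{n+\frac12},\widehat\psi^n)_n$ converges to a couple $(\widehat\phi,\widehat\psi)\in\mathcal{M}_\epsilon\times\mathcal{M}_0$ satisfying, for $0\le i\le I-1$, $0\le j\le J$, $\frac{\widehat\phi_{i+1,j}-\widehat\phi_{i,j}}{\Delta t}+\frac{\sigma^2}{2}\frac{\widehat\phi_{i,j+1}-2\widehat\phi_{i,j}+\widehat\phi_{i,j-1}}{(\Delta x)^2}=-\frac{1}{\sigma^2}f(x_j,\widehat\phi_{i,j}\widehat\psi_{i,j})\widehat\phi_{i,j}$, $\widehat\phi_{I,j}=\exp(u_T(x_j)/\sigma^2)$, $\frac{\widehat\psi_{i+1,j}-\widehat\psi_{i,j}}{\Delta t}-\frac{\sigma^2}{2}\frac{\widehat\psi_{i+1,j+1}-2\widehat\psi_{i+1,j}+\widehat\psi_{i+1,j-1}}{(\Delta x)^2}=\frac{1}{\sigma^2}f(x_j,\widehat\phi_{i+1,j}\widehat\psi_{i+1,j})\widehat\psi_{i+1,j}$,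 $\widehat\psi_{0,j}=m_0(x_j)/\widehat\phi_{0,j}$, with the Neumann conventions for indices $-1$ and $J+1$.
   Context: Discrete setting: $\Omega=(0,1)$, $T>0$, $\sigma>0$; $u_T:[0,1]\to\mathbb{R}$ bounded, $m_0:[0,1]\to\mathbb{R}$ bounded with $m_0\ge0$. $f:[0,1]\times\mathbb{R}\to\mathbb{R}$ is continuous and nonincreasing in its second variable, bounded with $\|f\|_\infty=\sup|f|$, and $f\le0$. For positive integers $I,J$: $\Delta t=T/I$, $\Delta x=1/J$, $x_j=j\Delta x$. $\mathcal{M}$ is the set of real matrices $(m_{i,j})_{0\le i\le I,0\le j\le J}$, $\mathcal{M}_\epsilon=\{m\in\mathcal{M}: m_{i,j}\ge\epsilon\ \forall i,j\}$. Conventions: $a_{i,-1}=a_{i,0}$, $a_{i,J+1}=a_{i,J}$ for any matrix $a$. $\widehat\Phi:\mathcal{M}_0\to\mathcal{M}$ maps $\widehat\psi$ to the unique $\widehat\phi$ solving the $\phi$-equations in (iii) (with $\widehat\psi$ given) and $\widehat\phi_{I,j}=\exp(u_T(x_j)/\sigma^2)$; $\widehat\Psi:\mathcal{M}_\epsilon\to\mathcal{M}$ maps $\widehat\phi$ to the unique $\widehat\psi$ solving the $\psi$-equations in (iii) (with $\widehat\phi$ given) and $\widehat\psi_{0,j}=m_0(x_j)/\widehat\phi_{0,j}$. These maps are well defined, $\widehat\Phi(\mathcal{M}_0)\subset\mathcal{M}_\epsilon$ and $\widehat\Psi(\mathcal{M}_\epsilon)\subset\mathcal{M}_0$. *)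

theory Defs
  imports "HOL-Analysis.Analysis"
begin

text \<open>Matrices (m_{i,j}), 0 \<le> i \<le> I, 0 \<le> j \<le> J, are represented as functions
  nat \<Rightarrow> nat \<Rightarrow> real; entries outside the index range are irrelevant and,
  for the maps defined via THE, normalised to 0 (set mats).\<close>

definition mats :: "nat \<Rightarrow> nat \<Rightarrow> (nat \<Rightarrow> nat \<Rightarrow> real) set" where
  "mats I J = {a. \<forall>i j. (I < i \<or> J < j) \<longrightarrow> a i j = 0}"

definition Meps :: "nat \<Rightarrow> nat \<Rightarrow> real \<Rightarrow> (nat \<Rightarrow> nat \<Rightarrow> real) set" where
  "Meps I J eps = {a. \<forall>i\<le>I. \<forall>j\<le>J. eps \<le> a i j}"

text \<open>Neumann conventions: a_{i,-1} = a_{i,0}, a_{i,J+1} = a_{i,J}.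
  (On nat, 0 - 1 = 0.)\<close>
definition lft :: "(nat \<Rightarrow> nat \<Rightarrow> real) \<Rightarrow> nat \<Rightarrow> nat \<Rightarrow> real" where
  "lft a i j = a i (j - 1)"
definition rgt :: "nat \<Rightarrow> (nat \<Rightarrow> nat \<Rightarrow> real) \<Rightarrow> nat \<Rightarrow> nat \<Rightarrow> real" where
  "rgt J a i j = a i (min (j + 1) J)"

definition xg :: "nat \<Rightarrow> nat \<Rightarrow> real" where
  "xg J j = real j / real J"

definition phi_eqs ::
  "real \<Rightarrow> real \<Rightarrow> nat \<Rightarrow> nat \<Rightarrow> (real \<Rightarrow> real) \<Rightarrow> (real \<Rightarrow> real \<Rightarrow> real)
   \<Rightarrow> (nat \<Rightarrow> nat \<Rightarrow> real) \<Rightarrow> (nat \<Rightarrow> nat \<Rightarrow> real) \<Rightarrow> bool" where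
  "phi_eqs T \<sigma> I J uT f psi phi \<longleftrightarrow>
     (\<forall>i<I. \<forall>j\<le>J.
        (phi (i+1) j - phi i j) / (T / real I)
        + \<sigma>\<^sup>2 / 2 * (rgt J phi i j - 2 * phi i j + lft phi i j) / (1 / real J)\<^sup>2
        = - (1 / \<sigma>\<^sup>2) * f (xg J j) (phi i j * psi i j) * phi i j)
   \<and> (\<forall>j\<le>J. phi I j = exp (uT (xg J j) / \<sigma>\<^sup>2))"

definition psi_eqs ::
  "real \<Rightarrow> real \<Rightarrow> nat \<Rightarrow> nat \<Rightarrow> (real \<Rightarrow> real) \<Rightarrow> (real \<Rightarrow> real \<Rightarrow> real)
   \<Rightarrow> (nat \<Rightarrow> nat \<Rightarrow> real) \<Rightarrow> (nat \<Rightarrow> nat \<Rightarrow> real) \<Rightarrow> bool" where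
  "psi_eqs T \<sigma> I J m0 f phi psi \<longleftrightarrow>
     (\<forall>i<I. \<forall>j\<le>J.
        (psi (i+1) j - psi i j) / (T / real I)
        - \<sigma>\<^sup>2 / 2 * (rgt J psi (i+1) j - 2 * psi (i+1) j + lft psi (i+1) j) / (1 / real J)\<^sup>2
        = (1 / \<sigma>\<^sup>2) * f (xg J j) (phi (i+1) j * psi (i+1) j) * psi (i+1) j)
   \<and> (\<forall>j\<le>J. psi 0 j = m0 (xg J j) / phi 0 j)"

definition PhiHat ::
  "real \<Rightarrow> real \<Rightarrow> nat \<Rightarrow> nat \<Rightarrow> (real \<Rightarrow> real) \<Rightarrow> (real \<Rightarrow> real \<Rightarrow> real)
   \<Rightarrow> (nat \<Rightarrow> nat \<Rightarrow> real) \<Rightarrow> (nat \<Rightarrow> nat \<Rightarrow> real)" where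
  "PhiHat T \<sigma> I J uT f psi = (THE phi. phi \<in> mats I J \<and> phi_eqs T \<sigma> I J uT f psi phi)"

definition PsiHat ::
  "real \<Rightarrow> real \<Rightarrow> nat \<Rightarrow> nat \<Rightarrow> (real \<Rightarrow> real) \<Rightarrow> (real \<Rightarrow> real \<Rightarrow> real)
   \<Rightarrow> (nat \<Rightarrow> nat \<Rightarrow> real) \<Rightarrow> (nat \<Rightarrow> nat \<Rightarrow> real)" where
  "PsiHat T \<sigma> I J m0 f phi = (THE psi. psi \<in> mats I J \<and> psi_eqs T \<sigma> I J m0 f phi psi)"

text \<open>The iteration: psi^0 = 0, phi^{n+1/2} = PhiHat psi^n, psi^{n+1} = PsiHat phi^{n+1/2}.\<close>
primrec psi_seq ::
  "real \<Rightarrow> real \<Rightarrow> nat \<Rightarrow> nat \<Rightarrow> (real \<Rightarrow> real) \<Rightarrow> (real \<Rightarrow> real) \<Rightarrow> (real \<Rightarrow> real \<Rightarrow> real)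
   \<Rightarrow> nat \<Rightarrow> (nat \<Rightarrow> nat \<Rightarrow> real)" where
  "psi_seq T \<sigma> I J uT m0 f 0 = (\<lambda>i j. 0)"
| "psi_seq T \<sigma> I J uT m0 f (Suc n) =
     PsiHat T \<sigma> I J m0 f (PhiHat T \<sigma> I J uT f (psi_seq T \<sigma> I J uT m0 f n))"

definition phi_seq ::
  "real \<Rightarrow> real \<Rightarrow> nat \<Rightarrow> nat \<Rightarrow> (real \<Rightarrow> real) \<Rightarrow> (real \<Rightarrow> real) \<Rightarrow> (real \<Rightarrow> real \<Rightarrow> real)
   \<Rightarrow> nat \<Rightarrow> (nat \<Rightarrow> nat \<Rightarrow> real)" where
  "phi_seq T \<sigma> I J uT m0 f n = PhiHat T \<sigma> I J uT f (psi_seq T \<sigma> I J uT m0 f n)"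

end

theory Submission
  imports Defs
begin


definition rowop :: "real \<Rightarrow> real \<Rightarrow> nat \<Rightarrow> (nat \<Rightarrow> real \<Rightarrow> real) \<Rightarrow> (nat \<Rightarrow> real) \<Rightarrow> nat \<Rightarrow> real" where
  "rowop a k J g v j = (a + g j (v j)) * v j - k * (v (min (j+1) J) - 2 * v j + v (j - 1))"

lemma row_argmax: fixes h :: "nat \<Rightarrow> real" shows "\<exists>j\<le>J. \<forall>j'\<le>J. h j' \<le> h j"
proof -
  have "Max (h ` {..J}) \<in> h ` {..J}" by (rule Max_in) auto
  then obtain j where "j \<le> J" "h j = Max (h ` {..J})" by (metis imageE atMost_iff)
  moreover have "\<forall>j'\<le>J. h j' \<le> Max (h ` {..J})" by simp
  ultimately show ?thesis by metis
qed

lemma row_cmp: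
  assumes a: "a > 0" and k: "k \<ge> 0"
    and v: "\<forall>j\<le>J. rowop a k J g1 v j = b1 j" and w: "\<forall>j\<le>J. rowop a k J g2 w j = b2 j"
    and b: "\<forall>j\<le>J. b2 j \<le> b1 j" and v0: "\<forall>j\<le>J. 0 \<le> v j"
    and g: "\<forall>j\<le>J. \<forall>x y. 0 \<le> x \<longrightarrow> x < y \<longrightarrow> g1 j x \<le> g2 j y"
    and g1: "\<forall>j\<le>J. \<forall>x. 0 \<le> x \<longrightarrow> 0 \<le> g1 j x"
  shows "\<forall>j\<le>J. w j \<le> v j"
proof (rule ccontr)
  assume "\<not> ?thesis"
  then obtain j1 where j1: "j1 \<le> J" "w j1 > v j1" by auto
  obtain j where j: "j \<le> J" "\<forall>j'\<le>J. w j' - v j' \<le> w j - v j"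
    using row_argmax[of J "\<lambda>j. w j - v j"] by auto
  have pos: "w j - v j > 0" using j j1 by force
  have r: "w (min (j+1) J) - v (min (j+1) J) \<le> w j - v j" using j by auto
  have l: "w (j-1) - v (j-1) \<le> w j - v j" using j by auto
  have v0j: "0 \<le> v j" using v0 j by auto
  have gg: "g1 j (v j) \<le> g2 j (w j)" using g j v0j pos by auto
  have g1j: "0 \<le> g1 j (v j)" using g1 j v0j by auto
  have p1: "g1 j (v j) * w j \<le> g2 j (w j) * w j" using gg pos v0j by (intro mult_right_mono) auto
  have p2: "g1 j (v j) * v j \<le> g1 j (v j) * w j" using g1j pos by (intro mult_left_mono) auto
  have p3: "k * ((w (min (j+1) J) - v (min (j+1) J)) - 2 * (w j - v j) + (w (j-1) - v (j-1))) \<le> 0"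
    using r l k by (intro mult_nonneg_nonpos) auto
  have p4: "a * (w j - v j) > 0" using a pos by simp
  have e1: "rowop a k J g1 v j = b1 j" and e2: "rowop a k J g2 w j = b2 j" using v w j by auto
  have "b2 j \<le> b1 j" using b j by auto
  then show False using e1 e2 p1 p2 p3 p4 unfolding rowop_def by (simp add: algebra_simps)
qed

lemma row_lower:
  assumes a: "a > 0" and k: "k \<ge> 0"
    and v: "\<forall>j\<le>J. rowop a k J g v j = b j"
    and g0: "\<forall>j\<le>J. \<forall>x. 0 \<le> g j x" and gM: "\<forall>j\<le>J. \<forall>x. g j x \<le> M"
    and be: "0 \<le> \<beta>" and bb: "\<forall>j\<le>J. \<beta> \<le> b j"
  shows "\<forall>j\<le>J. \<beta> / (a + M) \<le> v j"
proof -
  obtain j where j: "j \<le> J" "\<forall>j'\<le>J. - v j' \<le> - v j"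
    using row_argmax[of J "\<lambda>j. - v j"] by auto
  have r: "v j \<le> v (min (j+1) J)" using j by auto
  have l: "v j \<le> v (j-1)" using j by auto
  have p3: "k * (v (min (j+1) J) - 2 * v j + v (j-1)) \<ge> 0"
    using r l k by (intro mult_nonneg_nonneg) auto
  have e: "rowop a k J g v j = b j" using v j by auto
  have bj: "\<beta> \<le> b j" using bb j by auto
  have g0j: "0 \<le> g j (v j)" and gMj: "g j (v j) \<le> M" using g0 gM j by auto
  have key: "(a + g j (v j)) * v j \<ge> \<beta>" using e p3 bj unfolding rowop_def by linarith
  have vj0: "v j \<ge> 0"
  proof (rule ccontr)
    assume "\<not> v j \<ge> 0"
    then have "(a + g j (v j)) * v j < 0" using a g0j by (intro mult_pos_neg) auto
    then show False using key be by linarith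
  qed
  have "(a + M) * v j \<ge> (a + g j (v j)) * v j" using vj0 gMj by (intro mult_right_mono) auto
  then have "(a + M) * v j \<ge> \<beta>" using key by linarith
  then have "\<beta> / (a + M) \<le> v j" using a g0j gMj by (simp add: divide_le_eq mult.commute)
  then show ?thesis using j by force
qed

lemma row_upper:
  assumes a: "a > 0" and k: "k \<ge> 0"
    and v: "\<forall>j\<le>J. rowop a k J g v j = b j" and v0: "\<forall>j\<le>J. 0 \<le> v j"
    and g0: "\<forall>j\<le>J. \<forall>x. 0 \<le> x \<longrightarrow> 0 \<le> g j x" and bb: "\<forall>j\<le>J. b j \<le> B"
  shows "\<forall>j\<le>J. v j \<le> B / a"
proof -
  obtain j where j: "j \<le> J" "\<forall>j'\<le>J. v j' \<le> v j"
    using row_argmax[of J v] by auto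
  have r: "v (min (j+1) J) \<le> v j" using j by auto
  have l: "v (j-1) \<le> v j" using j by auto
  have p3: "k * (v (min (j+1) J) - 2 * v j + v (j-1)) \<le> 0"
    using r l k by (intro mult_nonneg_nonpos) auto
  have e: "rowop a k J g v j = b j" using v j by auto
  have bj: "b j \<le> B" using bb j by auto
  have vj0: "0 \<le> v j" using v0 j by auto
  have g0j: "0 \<le> g j (v j)" using g0 j vj0 by auto
  have key: "(a + g j (v j)) * v j \<le> B" using e p3 bj unfolding rowop_def by linarith
  have "a * v j \<le> (a + g j (v j)) * v j" using vj0 g0j by (intro mult_right_mono) auto
  then have "a * v j \<le> B" using key by linarith
  then have "v j \<le> B / a" using a by (simp add: le_divide_eq mult.commute)
  then show ?thesis using j by force
qed

lemma scal_ex: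
  fixes g :: "real \<Rightarrow> real"
  assumes c: "c > 0" and gc: "\<forall>x. isCont g x" and g0: "\<forall>x\<ge>0. 0 \<le> g x" and r: "r \<ge> 0"
  shows "\<exists>x\<ge>0. (c + g x) * x = r"
proof -
  have cont: "continuous_on {0..r/c} (\<lambda>x. (c + g x) * x)"
    using gc by (intro continuous_at_imp_continuous_on ballI continuous_intros) auto
  have "g (r/c) \<ge> 0" using g0 r c by auto
  then have "(c + g (r/c)) * (r/c) \<ge> r" using c r
    by (simp add: algebra_simps) 
  moreover have "(c + g 0) * 0 \<le> r" using r by simp
  ultimately obtain x where "0 \<le> x" "x \<le> r/c" "(c + g x) * x = r"
    using IVT'[of "\<lambda>x. (c + g x) * x" 0 r "r/c"] cont r c by auto
  then show ?thesis by auto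
qed

lemma scal_mono:
  fixes g :: "real \<Rightarrow> real"
  assumes c: "c > 0" and gm: "\<forall>x y. 0\<le>x \<longrightarrow> x\<le>y \<longrightarrow> g x \<le> g y" and g0: "\<forall>x\<ge>0. 0 \<le> g x"
    and x: "0 \<le> x" and y: "0 \<le> y" and le: "(c + g x) * x \<le> (c + g y) * y"
  shows "x \<le> y"
proof (rule ccontr)
  assume "\<not> x \<le> y"
  then have yx: "y < x" by simp
  have "g y \<le> g x" using gm y yx by auto
  moreover have "0 \<le> g y" using g0 y by auto
  ultimately have "g y * y \<le> g x * x" using y yx by (intro mult_mono) auto
  moreover have "c * y < c * x" using c yx by simp
  ultimately show False using le by (simp add: algebra_simps)
qed

lemma row_exists:
  assumes a: "a > 0" and k: "k \<ge> 0" and b: "\<forall>j\<le>J. 0 \<le> b j"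
    and gc: "\<forall>j\<le>J. \<forall>x. isCont (g j) x" and g0: "\<forall>j\<le>J. \<forall>x\<ge>0. 0 \<le> g j x"
    and gm: "\<forall>j\<le>J. \<forall>x y. 0\<le>x \<longrightarrow> x\<le>y \<longrightarrow> g j x \<le> g j y"
  shows "\<exists>v. (\<forall>j\<le>J. 0 \<le> v j) \<and> (\<forall>j\<le>J. rowop a k J g v j = b j)"
proof -
  define c where "c = a + 2 * k"
  have c: "c > 0" using a k by (simp add: c_def)
  define rhs where "rhs w j = b j + k * (w (min (j+1) J) + w (j-1))" for w :: "nat \<Rightarrow> real" and j
  define Tm where "Tm w j = (SOME x. 0 \<le> x \<and> (c + g j x) * x = rhs w j)" for w j
  have Tspec: "0 \<le> Tm w j \<and> (c + g j (Tm w j)) * Tm w j = rhs w j"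
    if w: "\<forall>j\<le>J. 0 \<le> w j" and j: "j \<le> J" for w j
  proof -
    have "rhs w j \<ge> 0" unfolding rhs_def using w j b k by (auto intro!: add_nonneg_nonneg mult_nonneg_nonneg)
    then have "\<exists>x\<ge>0. (c + g j x) * x = rhs w j" using scal_ex[of c "g j" "rhs w j"] c gc g0 j by auto
    then show ?thesis unfolding Tm_def by (rule someI_ex[where P="\<lambda>x. 0 \<le> x \<and> (c + g j x) * x = rhs w j"])
  qed
  define Bs where "Bs = (\<Sum>j\<le>J. b j)"
  define R where "R = Bs / a"
  have bBs: "b j \<le> Bs" if "j \<le> J" for j
    unfolding Bs_def using that b by (intro member_le_sum) auto
  have R0: "R \<ge> 0" using bBs[of 0] b a by (auto simp: R_def)
  have Tbound: "Tm w j \<le> R" if w: "\<forall>j\<le>J. 0 \<le> w j \<and> w j \<le> R" and j: "j \<le> J" for w j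
  proof -
    have ts: "0 \<le> Tm w j" "(c + g j (Tm w j)) * Tm w j = rhs w j" using Tspec[of w j] w j by auto
    have "rhs w j \<le> Bs + k * (R + R)" unfolding rhs_def using w j bBs[of j] k
      by (intro add_mono mult_left_mono) auto
    also have "\<dots> = c * R" using a by (simp add: c_def R_def algebra_simps)
    finally have "rhs w j \<le> c * R" .
    moreover have "c * Tm w j \<le> (c + g j (Tm w j)) * Tm w j" using ts g0 j by (intro mult_right_mono) auto
    ultimately have "c * Tm w j \<le> c * R" using ts by linarith
    then show ?thesis using c by simp
  qed
  have Tmono: "Tm w1 j \<le> Tm w2 j" if w1: "\<forall>j\<le>J. 0 \<le> w1 j" and w2: "\<forall>j\<le>J. 0 \<le> w2 j"
    and le: "\<forall>j\<le>J. w1 j \<le> w2 j" and j: "j \<le> J" for w1 w2 j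
  proof -
    have "rhs w1 j \<le> rhs w2 j" unfolding rhs_def using le j k by (intro add_left_mono mult_left_mono add_mono) auto
    then have "(c + g j (Tm w1 j)) * Tm w1 j \<le> (c + g j (Tm w2 j)) * Tm w2 j"
      using Tspec[OF w1 j] Tspec[OF w2 j] by simp
    moreover have "0 \<le> Tm w1 j" "0 \<le> Tm w2 j" using Tspec[OF w1 j] Tspec[OF w2 j] by auto
    moreover have "\<forall>x y. 0\<le>x \<longrightarrow> x\<le>y \<longrightarrow> g j x \<le> g j y" "\<forall>x\<ge>0. 0 \<le> g j x" using gm g0 j by auto
    ultimately show ?thesis using scal_mono[of c "g j"] c by blast
  qed
  define W where "W n = (Tm ^^ n) (\<lambda>_. 0)" for n
  have W0: "W 0 = (\<lambda>_. 0)" and WS: "W (Suc n) = Tm (W n)" for n by (simp_all add: W_def)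
  have Wb: "\<forall>j\<le>J. 0 \<le> W n j \<and> W n j \<le> R" for n
  proof (induction n)
    case 0 then show ?case using R0 by (simp add: W0)
  next
    case (Suc n) then show ?case using Tspec[of "W n"] Tbound[of "W n"] by (simp add: WS)
  qed
  have Wm: "\<forall>j\<le>J. W n j \<le> W (Suc n) j" for n
  proof (induction n)
    case 0 then show ?case using Wb[of 1] by (simp add: W0)
  next
    case (Suc n) then show ?case using Tmono[of "W n" "W (Suc n)"] Wb[of n] Wb[of "Suc n"]
      by (simp add: WS[of "Suc n"] WS[of n])
  qed
  define v where "v j = Sup (range (\<lambda>n. W n j))" for j
  have lim: "(\<lambda>n. W n j) \<longlonglongrightarrow> v j" if j: "j \<le> J" for j
    unfolding v_def
  proof (rule LIMSEQ_incseq_SUP)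
    show "bdd_above (range (\<lambda>n. W n j))" using Wb j by (intro bdd_aboveI2[where M=R]) auto
    show "incseq (\<lambda>n. W n j)" using Wm j by (intro incseq_SucI) auto
  qed
  have v0: "0 \<le> v j" if j: "j \<le> J" for j
    using lim[OF j] Wb j by (intro LIMSEQ_le_const[of "\<lambda>n. W n j"]) auto
  have eq: "rowop a k J g v j = b j" if j: "j \<le> J" for j
  proof -
    have jr: "min (j+1) J \<le> J" and jl: "j - 1 \<le> J" using j by auto
    have e: "(c + g j (W (Suc n) j)) * W (Suc n) j = rhs (W n) j" for n
      using Tspec[of "W n" j] Wb[of n] j by (simp add: WS)
    have l1: "(\<lambda>n. (c + g j (W (Suc n) j)) * W (Suc n) j) \<longlonglongrightarrow> (c + g j (v j)) * v j"
    proof -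
      have ls: "(\<lambda>n. W (Suc n) j) \<longlonglongrightarrow> v j" using lim[OF j] by (rule LIMSEQ_Suc)
      have "(\<lambda>n. g j (W (Suc n) j)) \<longlonglongrightarrow> g j (v j)" using gc j ls isCont_tendsto_compose[where g="g j" and l="v j" and f="\<lambda>n. W (Suc n) j" and F=sequentially] by blast
      then show ?thesis using ls by (intro tendsto_mult tendsto_add tendsto_const)
    qed
    have l2: "(\<lambda>n. rhs (W n) j) \<longlonglongrightarrow> rhs v j"
      unfolding rhs_def using lim[OF jr] lim[OF jl] by (intro tendsto_mult tendsto_add tendsto_const)
    have "(c + g j (v j)) * v j = rhs v j" using LIMSEQ_unique[OF l1] l2 e by simp
    then show ?thesis unfolding rowop_def rhs_def c_def by (simp add: algebra_simps)
  qed
  show ?thesis using v0 eq by blast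
qed




lemma backward_build:
  fixes P :: "nat \<Rightarrow> (nat \<Rightarrow> real) \<Rightarrow> (nat \<Rightarrow> real) \<Rightarrow> bool"
  assumes r0: "\<forall>j\<le>J. 0 \<le> r0 j" "\<forall>j>J. r0 j = 0"
    and step: "\<And>i r. i < I \<Longrightarrow> \<forall>j\<le>J. 0 \<le> r j \<Longrightarrow> \<exists>v. (\<forall>j\<le>J. 0 \<le> v j) \<and> (\<forall>j>J. v j = 0) \<and> P i r v"
  shows "\<exists>M\<in>mats I J. (\<forall>j. M I j = r0 j) \<and> (\<forall>i<I. P i (M (Suc i)) (M i))"
proof -
  define Q where "Q m r v = ((\<forall>j\<le>J. 0 \<le> v j) \<and> (\<forall>j>J. v j = 0) \<and> P (I - Suc m) r v)" for m r v
  define R where "R = rec_nat r0 (\<lambda>m r. SOME v. Q m r v)"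
  have R0: "R 0 = r0" and RS: "R (Suc m) = (SOME v. Q m (R m) v)" for m by (simp_all add: R_def)
  have inv: "m \<le> I \<longrightarrow> (\<forall>j\<le>J. 0 \<le> R m j) \<and> (\<forall>j>J. R m j = 0) \<and> (m > 0 \<longrightarrow> Q (m - 1) (R (m - 1)) (R m))" for m
  proof (induction m)
    case 0 then show ?case using r0 by (simp add: R0)
  next
    case (Suc m)
    show ?case
    proof
      assume "Suc m \<le> I"
      then have m: "m < I" "m \<le> I" by auto
      then have "\<exists>v. Q m (R m) v" using Suc step[of "I - Suc m" "R m"] unfolding Q_def by auto
      then have "Q m (R m) (R (Suc m))" unfolding RS by (rule someI_ex)
      then show "(\<forall>j\<le>J. 0 \<le> R (Suc m) j) \<and> (\<forall>j>J. R (Suc m) j = 0) \<and> (Suc m > 0 \<longrightarrow> Q (Suc m - 1) (R (Suc m - 1)) (R (Suc m)))"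
        unfolding Q_def by auto
    qed
  qed
  define M where "M i j = (if i \<le> I then R (I - i) j else 0)" for i j
  have "M \<in> mats I J" unfolding mats_def M_def using inv by auto
  moreover have "\<forall>j. M I j = r0 j" by (simp add: M_def R0)
  moreover have "P i (M (Suc i)) (M i)" if i: "i < I" for i
  proof -
    have e: "I - i = Suc (I - Suc i)" using i by auto
    have "Q (I - Suc i) (R (I - Suc i)) (R (I - i))" using inv[of "I - i"] i e by auto
    moreover have "I - Suc (I - Suc i) = i" using i by auto
    moreover have "M (Suc i) = R (I - Suc i)" "M i = R (I - i)" using i by (auto simp: M_def fun_eq_iff)
    ultimately show ?thesis unfolding Q_def by auto
  qed
  ultimately show ?thesis by blast
qed

lemma forward_build:
  fixes P :: "nat \<Rightarrow> (nat \<Rightarrow> real) \<Rightarrow> (nat \<Rightarrow> real) \<Rightarrow> bool"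
  assumes r0: "\<forall>j\<le>J. 0 \<le> r0 j" "\<forall>j>J. r0 j = 0"
    and step: "\<And>i r. i < I \<Longrightarrow> \<forall>j\<le>J. 0 \<le> r j \<Longrightarrow> \<exists>v. (\<forall>j\<le>J. 0 \<le> v j) \<and> (\<forall>j>J. v j = 0) \<and> P i r v"
  shows "\<exists>M\<in>mats I J. (\<forall>j. M 0 j = r0 j) \<and> (\<forall>i<I. P i (M i) (M (Suc i)))"
proof -
  define Q where "Q m r v = ((\<forall>j\<le>J. 0 \<le> v j) \<and> (\<forall>j>J. v j = 0) \<and> P m r v)" for m r v
  define R where "R = rec_nat r0 (\<lambda>m r. SOME v. Q m r v)"
  have R0: "R 0 = r0" and RS: "R (Suc m) = (SOME v. Q m (R m) v)" for m by (simp_all add: R_def)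
  have inv: "m \<le> I \<longrightarrow> (\<forall>j\<le>J. 0 \<le> R m j) \<and> (\<forall>j>J. R m j = 0) \<and> (m > 0 \<longrightarrow> Q (m - 1) (R (m - 1)) (R m))" for m
  proof (induction m)
    case 0 then show ?case using r0 by (simp add: R0)
  next
    case (Suc m)
    show ?case
    proof
      assume "Suc m \<le> I"
      then have m: "m < I" "m \<le> I" by auto
      then have "\<exists>v. Q m (R m) v" using Suc step[of m "R m"] unfolding Q_def by auto
      then have "Q m (R m) (R (Suc m))" unfolding RS by (rule someI_ex)
      then show "(\<forall>j\<le>J. 0 \<le> R (Suc m) j) \<and> (\<forall>j>J. R (Suc m) j = 0) \<and> (Suc m > 0 \<longrightarrow> Q (Suc m - 1) (R (Suc m - 1)) (R (Suc m)))"
        unfolding Q_def by auto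
    qed
  qed
  define M where "M i j = (if i \<le> I then R i j else 0)" for i j
  have "M \<in> mats I J" unfolding mats_def M_def using inv by auto
  moreover have "\<forall>j. M 0 j = r0 j" by (simp add: M_def R0)
  moreover have "P i (M i) (M (Suc i))" if i: "i < I" for i
  proof -
    have "Q i (R i) (R (Suc i))" using inv[of "Suc i"] i by auto
    moreover have "M (Suc i) = R (Suc i)" "M i = R i" using i by (auto simp: M_def fun_eq_iff)
    ultimately show ?thesis unfolding Q_def by auto
  qed
  ultimately show ?thesis by blast
qed

definition gg :: "real \<Rightarrow> nat \<Rightarrow> (real \<Rightarrow> real \<Rightarrow> real) \<Rightarrow> (nat \<Rightarrow> real) \<Rightarrow> nat \<Rightarrow> real \<Rightarrow> real" where
  "gg \<sigma> J f p j x = - (1 / \<sigma>\<^sup>2) * f (xg J j) (x * p j)"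

lemma eqv_phi:
  fixes dt a h s A B X G :: real
  assumes "dt \<noteq> 0" "a = 1 / dt"
  shows "((A - B) / dt + s * X / h = G * B) \<longleftrightarrow> ((a + G) * B - s / h * X = a * A)"
proof -
  have k: "(a + G) * B - s / h * X - a * A = -((A - B) / dt + s * X / h - G * B)"
    unfolding assms(2) by (simp add: algebra_simps diff_divide_distrib)
  have e1: "((A - B) / dt + s * X / h = G * B) \<longleftrightarrow> ((A - B) / dt + s * X / h - G * B = 0)" by simp
  have e2: "((a + G) * B - s / h * X = a * A) \<longleftrightarrow> ((a + G) * B - s / h * X - a * A = 0)" by simp
  show ?thesis unfolding e1 e2 k neg_equal_0_iff_equal by (rule refl)
qed
lemma phi_eqs_iff:
  assumes T: "T > 0" and I: "I > 0"
  shows "phi_eqs T \<sigma> I J uT f psi phi \<longleftrightarrow>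
    (\<forall>i<I. \<forall>j\<le>J. rowop (real I / T) (\<sigma>\<^sup>2 / 2 / (1 / real J)\<^sup>2) J (gg \<sigma> J f (psi i)) (phi i) j = real I / T * phi (i+1) j)
    \<and> (\<forall>j\<le>J. phi I j = exp (uT (xg J j) / \<sigma>\<^sup>2))"
proof -
  have dt: "T / real I \<noteq> 0" "real I / T = 1 / (T / real I)" using T I by auto
  show ?thesis unfolding phi_eqs_def rowop_def gg_def lft_def rgt_def
    by (simp only: eqv_phi[OF dt])
qed

lemma eqv_psi2:
  fixes dt a h s A B X F c :: real
  assumes "dt \<noteq> 0" "a = 1 / dt"
  shows "((A - B) / dt - s * X / h = c * F * A) \<longleftrightarrow> ((a + - c * F) * A - s / h * X = a * B)"
proof -
  have k: "(a + - c * F) * A - s / h * X - a * B = ((A - B) / dt - s * X / h - c * F * A)"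
    unfolding assms(2) by (simp add: algebra_simps diff_divide_distrib)
  have e1: "((A - B) / dt - s * X / h = c * F * A) \<longleftrightarrow> ((A - B) / dt - s * X / h - c * F * A = 0)" by simp
  have e2: "((a + - c * F) * A - s / h * X = a * B) \<longleftrightarrow> ((a + - c * F) * A - s / h * X - a * B = 0)" by simp
  show ?thesis unfolding e1 e2 k neg_equal_0_iff_equal by (rule refl)
qed
lemma psi_eqs_iff:
  assumes T: "T > 0" and I: "I > 0"
  shows "psi_eqs T \<sigma> I J m0 f phi psi \<longleftrightarrow>
    (\<forall>i<I. \<forall>j\<le>J. rowop (real I / T) (\<sigma>\<^sup>2 / 2 / (1 / real J)\<^sup>2) J (gg \<sigma> J f (phi (i+1))) (psi (i+1)) j = real I / T * psi i j)
    \<and> (\<forall>j\<le>J. psi 0 j = m0 (xg J j) / phi 0 j)"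
proof -
  have dt: "T / real I \<noteq> 0" "real I / T = 1 / (T / real I)" using T I by auto
  show ?thesis unfolding psi_eqs_def rowop_def gg_def lft_def rgt_def
    by (simp only: eqv_psi2[OF dt] mult.commute[of "psi _ _" "phi _ _"] minus_mult_left)
qed




lemma rowop_cong: "(\<forall>j\<le>J. v j = v' j) \<Longrightarrow> j \<le> J \<Longrightarrow> rowop a k J g v j = rowop a k J g v' j"
  by (simp add: rowop_def)

context
  fixes T \<sigma> :: real and I J :: nat and f :: "real \<Rightarrow> real \<Rightarrow> real" and F :: real
  assumes T: "T > 0" and \<sigma>: "\<sigma> > 0" and I: "I > 0" and J: "J > 0"
    and f0: "\<forall>x\<in>{0..1}. \<forall>y. f x y \<le> 0"
    and fm: "\<forall>x\<in>{0..1}. \<forall>y1 y2. y1 \<le> y2 \<longrightarrow> f x y2 \<le> f x y1"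
    and fb: "\<forall>x\<in>{0..1}. \<forall>y. \<bar>f x y\<bar> \<le> F"
    and fc: "\<forall>x\<in>{0..1}. \<forall>y. isCont (f x) y"
begin

lemma xg01: "j \<le> J \<Longrightarrow> xg J j \<in> {0..1}" using J by (auto simp: xg_def)

lemma F0: "F \<ge> 0" using fb[rule_format, of 0 0] by auto

lemma gg0: "j \<le> J \<Longrightarrow> 0 \<le> gg \<sigma> J f p j x"
  unfolding gg_def using f0 xg01[of j] \<sigma> by (intro mult_nonpos_nonpos) auto

lemma ggM: "j \<le> J \<Longrightarrow> gg \<sigma> J f p j x \<le> F / \<sigma>\<^sup>2"
proof -
  assume j: "j \<le> J"
  have "\<bar>f (xg J j) (x * p j)\<bar> \<le> F" using fb xg01[OF j] by blast
  then have "- f (xg J j) (x * p j) \<le> F" by linarith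
  then have "(- f (xg J j) (x * p j)) / \<sigma>\<^sup>2 \<le> F / \<sigma>\<^sup>2" by (rule divide_right_mono) simp
  then show ?thesis unfolding gg_def by simp
qed

lemma ggc: "j \<le> J \<Longrightarrow> isCont (gg \<sigma> J f p j) x"
proof -
  assume j: "j \<le> J"
  have "isCont (\<lambda>x. f (xg J j) (x * p j)) x"
  proof (rule isCont_o2[where g="f (xg J j)"])
    show "isCont (\<lambda>x. x * p j) x" by (intro continuous_intros)
    show "isCont (f (xg J j)) (x * p j)" using fc xg01[OF j] by blast
  qed
  then show ?thesis unfolding gg_def by (intro continuous_intros)
qed

lemma ggcross: "j \<le> J \<Longrightarrow> 0 \<le> p1 j \<Longrightarrow> p1 j \<le> p2 j \<Longrightarrow> 0 \<le> x \<Longrightarrow> x \<le> y \<Longrightarrow> gg \<sigma> J f p1 j x \<le> gg \<sigma> J f p2 j y"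
proof -
  assume j: "j \<le> J" and h: "0 \<le> p1 j" "p1 j \<le> p2 j" "0 \<le> x" "x \<le> y"
  have "x * p1 j \<le> y * p2 j" using h by (intro mult_mono) auto
  then have "f (xg J j) (y * p2 j) \<le> f (xg J j) (x * p1 j)" using fm xg01[OF j] by auto
  then show ?thesis unfolding gg_def using \<sigma> by (intro mult_left_mono_neg) auto
qed

lemma k0: "\<sigma>\<^sup>2 / 2 / (1 / real J)\<^sup>2 \<ge> 0" by simp
lemma a0: "real I / T > 0" using T I by simp

lemma phi_lower:
  assumes pe: "phi_eqs T \<sigma> I J uT f psi phi" and U: "\<forall>x\<in>{0..1}. \<bar>uT x\<bar> \<le> U"
  shows "\<forall>i\<le>I. \<forall>j\<le>J. exp (- U / \<sigma>\<^sup>2) * (real I / T / (real I / T + F / \<sigma>\<^sup>2)) ^ (I - i) \<le> phi i j"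
proof (rule allI, rule impI)
  fix i assume i: "i \<le> I"
  define a where "a = real I / T"
  define q where "q = a / (a + F / \<sigma>\<^sup>2)"
  have a: "a > 0" using a0 by (simp add: a_def)
  have Fs: "F / \<sigma>\<^sup>2 \<ge> 0" using F0 by simp
  have eqs: "\<forall>i<I. \<forall>j\<le>J. rowop a (\<sigma>\<^sup>2 / 2 / (1 / real J)\<^sup>2) J (gg \<sigma> J f (psi i)) (phi i) j = a * phi (i+1) j"
    and trm: "\<forall>j\<le>J. phi I j = exp (uT (xg J j) / \<sigma>\<^sup>2)"
    using pe phi_eqs_iff[OF T I] by (auto simp: a_def)
  show "\<forall>j\<le>J. exp (- U / \<sigma>\<^sup>2) * (real I / T / (real I / T + F / \<sigma>\<^sup>2)) ^ (I - i) \<le> phi i j"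
    unfolding a_def[symmetric] q_def[symmetric]
    using i
  proof (induction i rule: inc_induct)
    case base
    show ?case
    proof (intro allI impI)
      fix j assume j: "j \<le> J"
      have "- U \<le> uT (xg J j)" using U xg01[OF j] by fastforce
      then have "(- U) / \<sigma>\<^sup>2 \<le> uT (xg J j) / \<sigma>\<^sup>2" by (rule divide_right_mono) simp
      then show "exp (- U / \<sigma>\<^sup>2) * q ^ (I - I) \<le> phi I j" using trm j by simp
    qed
  next
    case (step n)
    define \<beta> where "\<beta> = a * (exp (- U / \<sigma>\<^sup>2) * q ^ (I - Suc n))"
    have q0: "q \<ge> 0" using a Fs by (simp add: q_def)
    have \<beta>0: "0 \<le> \<beta>" using a q0 by (simp add: \<beta>_def)
    have \<beta>b: "\<forall>j\<le>J. \<beta> \<le> a * phi (Suc n) j" using step.IH a unfolding \<beta>_def by (auto intro: mult_left_mono)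
    have "\<forall>j\<le>J. \<beta> / (a + F / \<sigma>\<^sup>2) \<le> phi n j"
      using row_lower[OF a k0, where J=J and g="gg \<sigma> J f (psi n)" and v="phi n" and b="\<lambda>j. a * phi (Suc n) j" and M="F / \<sigma>\<^sup>2" and \<beta>=\<beta>]
        eqs step.hyps \<beta>0 \<beta>b by (simp add: gg0 ggM)
    moreover have "\<beta> / (a + F / \<sigma>\<^sup>2) = exp (- U / \<sigma>\<^sup>2) * q ^ (I - n)"
    proof -
      have "I - n = Suc (I - Suc n)" using step.hyps by auto
      then have "q ^ (I - n) = q ^ (I - Suc n) * q" by simp
      moreover have "a + F / \<sigma>\<^sup>2 > 0" using a Fs by linarith
      ultimately show ?thesis unfolding \<beta>_def q_def by simp
    qed
    ultimately show ?case by simp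
  qed
qed

lemma phi_ge_eps:
  assumes pe: "phi_eqs T \<sigma> I J uT f psi phi" and U: "\<forall>x\<in>{0..1}. \<bar>uT x\<bar> \<le> U"
  shows "\<forall>i\<le>I. \<forall>j\<le>J. exp (- (1 / \<sigma>\<^sup>2) * (U + F * T)) \<le> phi i j"
proof (intro allI impI)
  fix i j assume i: "i \<le> I" and j: "j \<le> J"
  define a where "a = real I / T"
  define M where "M = F / \<sigma>\<^sup>2"
  define q where "q = a / (a + M)"
  have a: "a > 0" using a0 by (simp add: a_def)
  have M0: "M \<ge> 0" using F0 by (simp add: M_def)
  have q0: "0 \<le> q" and q1: "q \<le> 1" using a M0 by (auto simp: q_def)
  have qe: "q = 1 / (1 + M * (T / real I))" using a T I by (simp add: q_def a_def field_simps)
  have "exp (- (M * (T / real I))) \<le> q"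
  proof -
    have "1 + M * (T / real I) \<le> exp (M * (T / real I))" by simp
    moreover have "0 < 1 + M * (T / real I)" using M0 T I by (simp add: add_pos_nonneg)
    ultimately have "1 / exp (M * (T / real I)) \<le> 1 / (1 + M * (T / real I))"
      by (intro divide_left_mono) auto
    then show ?thesis unfolding qe by (simp add: exp_minus field_simps)
  qed
  then have "exp (- (M * (T / real I))) ^ I \<le> q ^ I" by (intro power_mono) auto
  also have "\<dots> \<le> q ^ (I - i)" using q0 q1 by (intro power_decreasing) auto
  finally have "exp (- (M * T)) \<le> q ^ (I - i)"
    using I by (simp add: exp_of_nat_mult[symmetric])
  then have "exp (- U / \<sigma>\<^sup>2) * exp (- (M * T)) \<le> exp (- U / \<sigma>\<^sup>2) * q ^ (I - i)"
    by (intro mult_left_mono) auto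
  also have "\<dots> \<le> phi i j" using phi_lower[OF pe U] i j by (simp add: q_def M_def a_def)
  also have "exp (- U / \<sigma>\<^sup>2) * exp (- (M * T)) = exp (- (1 / \<sigma>\<^sup>2) * (U + F * T))"
    unfolding exp_add[symmetric] M_def by (simp add: add_divide_distrib)
  finally show "exp (- (1 / \<sigma>\<^sup>2) * (U + F * T)) \<le> phi i j" .
qed

lemma phi_nonneg:
  assumes pe: "phi_eqs T \<sigma> I J uT f psi phi" and U: "\<forall>x\<in>{0..1}. \<bar>uT x\<bar> \<le> U"
  shows "\<forall>i\<le>I. \<forall>j\<le>J. 0 \<le> phi i j"
  using phi_ge_eps[OF pe U] by (meson exp_ge_zero order_trans)

lemma phi_cmp:
  assumes peA: "phi_eqs T \<sigma> I J uT f psiA phiA" and peB: "phi_eqs T \<sigma> I J uT f psiB phiB"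
    and U: "\<forall>x\<in>{0..1}. \<bar>uT x\<bar> \<le> U"
    and ps: "\<forall>i\<le>I. \<forall>j\<le>J. 0 \<le> psiA i j \<and> psiA i j \<le> psiB i j"
  shows "\<forall>i\<le>I. \<forall>j\<le>J. phiB i j \<le> phiA i j"
proof (rule allI, rule impI)
  fix i assume i: "i \<le> I"
  define a where "a = real I / T"
  have a: "a > 0" using a0 by (simp add: a_def)
  have eA: "\<forall>i<I. \<forall>j\<le>J. rowop a (\<sigma>\<^sup>2 / 2 / (1 / real J)\<^sup>2) J (gg \<sigma> J f (psiA i)) (phiA i) j = a * phiA (i+1) j"
    and tA: "\<forall>j\<le>J. phiA I j = exp (uT (xg J j) / \<sigma>\<^sup>2)"
    using peA phi_eqs_iff[OF T I] by (auto simp: a_def)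
  have eB: "\<forall>i<I. \<forall>j\<le>J. rowop a (\<sigma>\<^sup>2 / 2 / (1 / real J)\<^sup>2) J (gg \<sigma> J f (psiB i)) (phiB i) j = a * phiB (i+1) j"
    and tB: "\<forall>j\<le>J. phiB I j = exp (uT (xg J j) / \<sigma>\<^sup>2)"
    using peB phi_eqs_iff[OF T I] by (auto simp: a_def)
  have nA: "\<forall>i\<le>I. \<forall>j\<le>J. 0 \<le> phiA i j" by (rule phi_nonneg[OF peA U])
  show "\<forall>j\<le>J. phiB i j \<le> phiA i j"
    using i
  proof (induction i rule: inc_induct)
    case base then show ?case using tA tB by simp
  next
    case (step n)
    have v: "\<forall>j\<le>J. rowop a (\<sigma>\<^sup>2 / 2 / (1 / real J)\<^sup>2) J (gg \<sigma> J f (psiA n)) (phiA n) j = a * phiA (Suc n) j"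
      using eA step.hyps by auto
    have w: "\<forall>j\<le>J. rowop a (\<sigma>\<^sup>2 / 2 / (1 / real J)\<^sup>2) J (gg \<sigma> J f (psiB n)) (phiB n) j = a * phiB (Suc n) j"
      using eB step.hyps by auto
    have b: "\<forall>j\<le>J. a * phiB (Suc n) j \<le> a * phiA (Suc n) j" using step.IH a by auto
    have v0: "\<forall>j\<le>J. 0 \<le> phiA n j" using nA step.hyps by auto
    have g: "\<forall>j\<le>J. \<forall>x y. 0 \<le> x \<longrightarrow> x < y \<longrightarrow> gg \<sigma> J f (psiA n) j x \<le> gg \<sigma> J f (psiB n) j y"
      using ps step.hyps by (auto intro!: ggcross)
    have g1: "\<forall>j\<le>J. \<forall>x. 0 \<le> x \<longrightarrow> 0 \<le> gg \<sigma> J f (psiA n) j x" by (simp add: gg0)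
    show ?case using row_cmp[OF a k0 v w b v0 g g1] .
  qed
qed

lemma phi_unique:
  assumes "phi1 \<in> mats I J" "phi2 \<in> mats I J"
    and pe1: "phi_eqs T \<sigma> I J uT f psi phi1" and pe2: "phi_eqs T \<sigma> I J uT f psi phi2"
    and U: "\<forall>x\<in>{0..1}. \<bar>uT x\<bar> \<le> U"
    and ps: "\<forall>i\<le>I. \<forall>j\<le>J. 0 \<le> psi i j"
  shows "phi1 = phi2"
proof (intro ext)
  fix i j
  show "phi1 i j = phi2 i j"
  proof (cases "i \<le> I \<and> j \<le> J")
    case True
    have "phi2 i j \<le> phi1 i j" using phi_cmp[OF pe1 pe2 U] ps True by auto
    moreover have "phi1 i j \<le> phi2 i j" using phi_cmp[OF pe2 pe1 U] ps True by auto
    ultimately show ?thesis by simp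
  next
    case False then show ?thesis using assms(1,2) unfolding mats_def by auto
  qed
qed

lemma phi_exists:
  assumes ps: "\<forall>i\<le>I. \<forall>j\<le>J. 0 \<le> psi i j"
  shows "\<exists>phi\<in>mats I J. phi_eqs T \<sigma> I J uT f psi phi"
proof -
  define a where "a = real I / T"
  have a: "a > 0" using a0 by (simp add: a_def)
  define P where "P i r v = (\<forall>j\<le>J. rowop a (\<sigma>\<^sup>2 / 2 / (1 / real J)\<^sup>2) J (gg \<sigma> J f (psi i)) v j = a * r j)" for i and r :: "nat \<Rightarrow> real" and v
  define r0 where "r0 j = (if j \<le> J then exp (uT (xg J j) / \<sigma>\<^sup>2) else 0)" for j
  have "\<exists>M\<in>mats I J. (\<forall>j. M I j = r0 j) \<and> (\<forall>i<I. P i (M (Suc i)) (M i))"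
  proof (rule backward_build)
    show "\<forall>j\<le>J. 0 \<le> r0 j" "\<forall>j>J. r0 j = 0" by (auto simp: r0_def)
  next
    fix i and r :: "nat \<Rightarrow> real" assume i: "i < I" and r: "\<forall>j\<le>J. 0 \<le> r j"
    have "\<exists>v. (\<forall>j\<le>J. 0 \<le> v j) \<and> (\<forall>j\<le>J. rowop a (\<sigma>\<^sup>2 / 2 / (1 / real J)\<^sup>2) J (gg \<sigma> J f (psi i)) v j = a * r j)"
    proof (rule row_exists[OF a k0])
      show "\<forall>j\<le>J. 0 \<le> a * r j" using a r by auto
      show "\<forall>j\<le>J. \<forall>x. isCont (gg \<sigma> J f (psi i) j) x" by (simp add: ggc)
      show "\<forall>j\<le>J. \<forall>x\<ge>0. 0 \<le> gg \<sigma> J f (psi i) j x" by (simp add: gg0)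
      show "\<forall>j\<le>J. \<forall>x y. 0 \<le> x \<longrightarrow> x \<le> y \<longrightarrow> gg \<sigma> J f (psi i) j x \<le> gg \<sigma> J f (psi i) j y"
        using ps i by (auto intro!: ggcross)
    qed
    then obtain v where v0: "\<forall>j\<le>J. 0 \<le> v j"
      and ve: "\<forall>j\<le>J. rowop a (\<sigma>\<^sup>2 / 2 / (1 / real J)\<^sup>2) J (gg \<sigma> J f (psi i)) v j = a * r j" by blast
    define v' where "v' j = (if j \<le> J then v j else 0)" for j
    have "\<forall>j\<le>J. v j = v' j" by (simp add: v'_def)
    then have "P i r v'" unfolding P_def using ve rowop_cong by metis
    moreover have "\<forall>j\<le>J. 0 \<le> v' j" "\<forall>j>J. v' j = 0" using v0 by (auto simp: v'_def)
    ultimately show "\<exists>v. (\<forall>j\<le>J. 0 \<le> v j) \<and> (\<forall>j>J. v j = 0) \<and> P i r v" by blast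
  qed
  then obtain M where M: "M \<in> mats I J" "\<forall>j. M I j = r0 j" "\<forall>i<I. P i (M (Suc i)) (M i)" by blast
  have "phi_eqs T \<sigma> I J uT f psi M"
    unfolding phi_eqs_iff[OF T I] using M by (auto simp: P_def r0_def a_def)
  then show ?thesis using M by blast
qed

lemma PhiHat_props:
  assumes U: "\<forall>x\<in>{0..1}. \<bar>uT x\<bar> \<le> U" and ps: "\<forall>i\<le>I. \<forall>j\<le>J. 0 \<le> psi i j"
  shows "PhiHat T \<sigma> I J uT f psi \<in> mats I J \<and> phi_eqs T \<sigma> I J uT f psi (PhiHat T \<sigma> I J uT f psi)"
proof -
  have "\<exists>!phi. phi \<in> mats I J \<and> phi_eqs T \<sigma> I J uT f psi phi"
    using phi_exists[OF ps] phi_unique[OF _ _ _ _ U ps] by blast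
  then show ?thesis unfolding PhiHat_def by (rule theI')
qed

lemma psi_bounds:
  assumes pe: "psi_eqs T \<sigma> I J m0 f phi psi" and e: "e > 0" and ph: "\<forall>i\<le>I. \<forall>j\<le>J. e \<le> phi i j"
    and m: "\<forall>x\<in>{0..1}. 0 \<le> m0 x \<and> m0 x \<le> Mm"
  shows "\<forall>i\<le>I. \<forall>j\<le>J. 0 \<le> psi i j \<and> psi i j \<le> Mm / e"
proof (rule allI, rule impI)
  fix i assume i: "i \<le> I"
  define a where "a = real I / T"
  have a: "a > 0" using a0 by (simp add: a_def)
  have eqs: "\<forall>i<I. \<forall>j\<le>J. rowop a (\<sigma>\<^sup>2 / 2 / (1 / real J)\<^sup>2) J (gg \<sigma> J f (phi (i+1))) (psi (i+1)) j = a * psi i j"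
    and ini: "\<forall>j\<le>J. psi 0 j = m0 (xg J j) / phi 0 j"
    using pe psi_eqs_iff[OF T I] by (auto simp: a_def)
  show "\<forall>j\<le>J. 0 \<le> psi i j \<and> psi i j \<le> Mm / e"
    using i
  proof (induction i)
    case 0
    show ?case
    proof (intro allI impI conjI)
      fix j assume j: "j \<le> J"
      have m0j: "0 \<le> m0 (xg J j)" "m0 (xg J j) \<le> Mm" using m xg01[OF j] by auto
      have p: "e \<le> phi 0 j" using ph j by auto
      show "0 \<le> psi 0 j" using ini j m0j p e by simp
      show "psi 0 j \<le> Mm / e" using ini j frac_le[of Mm "m0 (xg J j)" e "phi 0 j"] m0j p e by simp
    qed
  next
    case (Suc i)
    then have IH: "\<forall>j\<le>J. 0 \<le> psi i j \<and> psi i j \<le> Mm / e" and iI: "i < I" by auto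
    have v: "\<forall>j\<le>J. rowop a (\<sigma>\<^sup>2 / 2 / (1 / real J)\<^sup>2) J (gg \<sigma> J f (phi (Suc i))) (psi (Suc i)) j = a * psi i j"
      using eqs iI by auto
    have lo: "\<forall>j\<le>J. 0 / (a + F / \<sigma>\<^sup>2) \<le> psi (Suc i) j"
      using row_lower[OF a k0 v, where M="F / \<sigma>\<^sup>2" and \<beta>=0] IH a by (simp add: gg0 ggM)
    then have lo': "\<forall>j\<le>J. 0 \<le> psi (Suc i) j" by simp
    have bB: "\<forall>j\<le>J. a * psi i j \<le> a * (Mm / e)"
    proof (intro allI impI)
      fix j assume "j \<le> J"
      then have "psi i j \<le> Mm / e" using IH by auto
      then show "a * psi i j \<le> a * (Mm / e)" by (rule mult_left_mono) (use a in simp)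
    qed
    have "\<forall>j\<le>J. psi (Suc i) j \<le> a * (Mm / e) / a"
      using row_upper[OF a k0 v lo' _ bB] by (simp add: gg0)
    then show ?case using lo' a by simp
  qed
qed

lemma psi_cmp:
  assumes peA: "psi_eqs T \<sigma> I J m0 f phiA psiA" and peB: "psi_eqs T \<sigma> I J m0 f phiB psiB"
    and e: "e > 0" and ph: "\<forall>i\<le>I. \<forall>j\<le>J. e \<le> phiB i j \<and> phiB i j \<le> phiA i j"
    and m: "\<forall>x\<in>{0..1}. 0 \<le> m0 x \<and> m0 x \<le> Mm"
  shows "\<forall>i\<le>I. \<forall>j\<le>J. psiA i j \<le> psiB i j"
proof (rule allI, rule impI)
  fix i assume i: "i \<le> I"
  define a where "a = real I / T"
  have a: "a > 0" using a0 by (simp add: a_def)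
  have eA: "\<forall>i<I. \<forall>j\<le>J. rowop a (\<sigma>\<^sup>2 / 2 / (1 / real J)\<^sup>2) J (gg \<sigma> J f (phiA (i+1))) (psiA (i+1)) j = a * psiA i j"
    and iA: "\<forall>j\<le>J. psiA 0 j = m0 (xg J j) / phiA 0 j"
    using peA psi_eqs_iff[OF T I] by (auto simp: a_def)
  have eB: "\<forall>i<I. \<forall>j\<le>J. rowop a (\<sigma>\<^sup>2 / 2 / (1 / real J)\<^sup>2) J (gg \<sigma> J f (phiB (i+1))) (psiB (i+1)) j = a * psiB i j"
    and iB: "\<forall>j\<le>J. psiB 0 j = m0 (xg J j) / phiB 0 j"
    using peB psi_eqs_iff[OF T I] by (auto simp: a_def)
  have phB: "\<forall>i\<le>I. \<forall>j\<le>J. e \<le> phiB i j" using ph by auto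
  have nB: "\<forall>i\<le>I. \<forall>j\<le>J. 0 \<le> psiB i j" using psi_bounds[OF peB e phB m] by auto
  show "\<forall>j\<le>J. psiA i j \<le> psiB i j"
    using i
  proof (induction i)
    case 0
    show ?case
    proof (intro allI impI)
      fix j assume j: "j \<le> J"
      have m0j: "0 \<le> m0 (xg J j)" using m xg01[OF j] by auto
      have p: "e \<le> phiB 0 j" "phiB 0 j \<le> phiA 0 j" using ph j by auto
      have "m0 (xg J j) / phiA 0 j \<le> m0 (xg J j) / phiB 0 j"
        using p e m0j by (intro divide_left_mono) auto
      then show "psiA 0 j \<le> psiB 0 j" using iA iB j by simp
    qed
  next
    case (Suc i)
    then have IH: "\<forall>j\<le>J. psiA i j \<le> psiB i j" and iI: "i < I" by auto
    have v: "\<forall>j\<le>J. rowop a (\<sigma>\<^sup>2 / 2 / (1 / real J)\<^sup>2) J (gg \<sigma> J f (phiB (Suc i))) (psiB (Suc i)) j = a * psiB i j"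
      using eB iI by auto
    have w: "\<forall>j\<le>J. rowop a (\<sigma>\<^sup>2 / 2 / (1 / real J)\<^sup>2) J (gg \<sigma> J f (phiA (Suc i))) (psiA (Suc i)) j = a * psiA i j"
      using eA iI by auto
    have b: "\<forall>j\<le>J. a * psiA i j \<le> a * psiB i j" using IH a by auto
    have v0: "\<forall>j\<le>J. 0 \<le> psiB (Suc i) j" using nB iI by auto
    have g: "\<forall>j\<le>J. \<forall>x y. 0 \<le> x \<longrightarrow> x < y \<longrightarrow> gg \<sigma> J f (phiB (Suc i)) j x \<le> gg \<sigma> J f (phiA (Suc i)) j y"
    proof (intro allI impI)
      fix j and x y :: real assume j: "j \<le> J" and xy: "0 \<le> x" "x < y"
      have "e \<le> phiB (Suc i) j" "phiB (Suc i) j \<le> phiA (Suc i) j" using ph iI j by auto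
      then show "gg \<sigma> J f (phiB (Suc i)) j x \<le> gg \<sigma> J f (phiA (Suc i)) j y"
        using ggcross[of j "phiB (Suc i)" "phiA (Suc i)" x y] j e xy by auto
    qed
    have g1: "\<forall>j\<le>J. \<forall>x. 0 \<le> x \<longrightarrow> 0 \<le> gg \<sigma> J f (phiB (Suc i)) j x" by (simp add: gg0)
    show ?case using row_cmp[OF a k0 v w b v0 g g1] .
  qed
qed

lemma psi_unique:
  assumes "psi1 \<in> mats I J" "psi2 \<in> mats I J"
    and pe1: "psi_eqs T \<sigma> I J m0 f phi psi1" and pe2: "psi_eqs T \<sigma> I J m0 f phi psi2"
    and e: "e > 0" and ph: "\<forall>i\<le>I. \<forall>j\<le>J. e \<le> phi i j"
    and m: "\<forall>x\<in>{0..1}. 0 \<le> m0 x \<and> m0 x \<le> Mm"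
  shows "psi1 = psi2"
proof (intro ext)
  fix i j
  have ph': "\<forall>i\<le>I. \<forall>j\<le>J. e \<le> phi i j \<and> phi i j \<le> phi i j" using ph by auto
  show "psi1 i j = psi2 i j"
  proof (cases "i \<le> I \<and> j \<le> J")
    case True
    have "psi2 i j \<le> psi1 i j" using psi_cmp[OF pe2 pe1 e ph' m] True by auto
    moreover have "psi1 i j \<le> psi2 i j" using psi_cmp[OF pe1 pe2 e ph' m] True by auto
    ultimately show ?thesis by simp
  next
    case False then show ?thesis using assms(1,2) unfolding mats_def by auto
  qed
qed

lemma psi_exists:
  assumes e: "e > 0" and ph: "\<forall>i\<le>I. \<forall>j\<le>J. e \<le> phi i j"
    and m: "\<forall>x\<in>{0..1}. 0 \<le> m0 x \<and> m0 x \<le> Mm"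
  shows "\<exists>psi\<in>mats I J. psi_eqs T \<sigma> I J m0 f phi psi"
proof -
  define a where "a = real I / T"
  have a: "a > 0" using a0 by (simp add: a_def)
  define P where "P i r v = (\<forall>j\<le>J. rowop a (\<sigma>\<^sup>2 / 2 / (1 / real J)\<^sup>2) J (gg \<sigma> J f (phi (Suc i))) v j = a * r j)" for i and r :: "nat \<Rightarrow> real" and v
  define r0 where "r0 j = (if j \<le> J then m0 (xg J j) / phi 0 j else 0)" for j
  have "\<exists>M\<in>mats I J. (\<forall>j. M 0 j = r0 j) \<and> (\<forall>i<I. P i (M i) (M (Suc i)))"
  proof (rule forward_build)
    show "\<forall>j\<le>J. 0 \<le> r0 j"
    proof (intro allI impI)
      fix j assume j: "j \<le> J"
      have "0 \<le> m0 (xg J j)" using m xg01[OF j] by auto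
      moreover have "0 \<le> phi 0 j" using ph j e by force
      ultimately show "0 \<le> r0 j" using j by (simp add: r0_def)
    qed
    show "\<forall>j>J. r0 j = 0" by (auto simp: r0_def)
  next
    fix i and r :: "nat \<Rightarrow> real" assume i: "i < I" and r: "\<forall>j\<le>J. 0 \<le> r j"
    have "\<exists>v. (\<forall>j\<le>J. 0 \<le> v j) \<and> (\<forall>j\<le>J. rowop a (\<sigma>\<^sup>2 / 2 / (1 / real J)\<^sup>2) J (gg \<sigma> J f (phi (Suc i))) v j = a * r j)"
    proof (rule row_exists[OF a k0])
      show "\<forall>j\<le>J. 0 \<le> a * r j" using a r by auto
      show "\<forall>j\<le>J. \<forall>x. isCont (gg \<sigma> J f (phi (Suc i)) j) x" by (simp add: ggc)
      show "\<forall>j\<le>J. \<forall>x\<ge>0. 0 \<le> gg \<sigma> J f (phi (Suc i)) j x" by (simp add: gg0)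
      show "\<forall>j\<le>J. \<forall>x y. 0 \<le> x \<longrightarrow> x \<le> y \<longrightarrow> gg \<sigma> J f (phi (Suc i)) j x \<le> gg \<sigma> J f (phi (Suc i)) j y"
      proof (intro allI impI)
        fix j and x y :: real assume j: "j \<le> J" and xy: "0 \<le> x" "x \<le> y"
        have "0 \<le> phi (Suc i) j" using ph[rule_format, of "Suc i" j] i j e by auto
        then show "gg \<sigma> J f (phi (Suc i)) j x \<le> gg \<sigma> J f (phi (Suc i)) j y"
          using ggcross[OF j] xy by auto
      qed
    qed
    then obtain v where v0: "\<forall>j\<le>J. 0 \<le> v j"
      and ve: "\<forall>j\<le>J. rowop a (\<sigma>\<^sup>2 / 2 / (1 / real J)\<^sup>2) J (gg \<sigma> J f (phi (Suc i))) v j = a * r j" by blast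
    define v' where "v' j = (if j \<le> J then v j else 0)" for j
    have "\<forall>j\<le>J. v j = v' j" by (simp add: v'_def)
    then have "P i r v'" unfolding P_def using ve rowop_cong by metis
    moreover have "\<forall>j\<le>J. 0 \<le> v' j" "\<forall>j>J. v' j = 0" using v0 by (auto simp: v'_def)
    ultimately show "\<exists>v. (\<forall>j\<le>J. 0 \<le> v j) \<and> (\<forall>j>J. v j = 0) \<and> P i r v" by blast
  qed
  then obtain M where M: "M \<in> mats I J" "\<forall>j. M 0 j = r0 j" "\<forall>i<I. P i (M i) (M (Suc i))" by blast
  have "psi_eqs T \<sigma> I J m0 f phi M"
    unfolding psi_eqs_iff[OF T I] using M by (auto simp: P_def r0_def a_def)
  then show ?thesis using M by blast
qed

lemma PsiHat_props:
  assumes e: "e > 0" and ph: "\<forall>i\<le>I. \<forall>j\<le>J. e \<le> phi i j"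
    and m: "\<forall>x\<in>{0..1}. 0 \<le> m0 x \<and> m0 x \<le> Mm"
  shows "PsiHat T \<sigma> I J m0 f phi \<in> mats I J \<and> psi_eqs T \<sigma> I J m0 f phi (PsiHat T \<sigma> I J m0 f phi)"
proof -
  have "\<exists>!psi. psi \<in> mats I J \<and> psi_eqs T \<sigma> I J m0 f phi psi"
    using psi_exists[OF e ph m] psi_unique[OF _ _ _ _ e ph m] by blast
  then show ?thesis unfolding PsiHat_def by (rule theI')
qed

end


theorem proposition11:
  fixes T \<sigma> :: real and I J :: nat
    and uT m0 :: "real \<Rightarrow> real" and f :: "real \<Rightarrow> real \<Rightarrow> real"
  assumes "T > 0" "\<sigma> > 0" "I > 0" "J > 0"
    and "bounded (uT ` {0..1})"
    and "bounded (m0 ` {0..1})" "\<forall>x\<in>{0..1}. 0 \<le> m0 x"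
    and "continuous_on ({0..1} \<times> UNIV) (\<lambda>(x, y). f x y)"
    and "\<forall>x\<in>{0..1}. \<forall>y1 y2. y1 \<le> y2 \<longrightarrow> f x y2 \<le> f x y1"
    and "bounded ((\<lambda>(x, y). f x y) ` ({0..1} \<times> UNIV))"
    and "\<forall>x\<in>{0..1}. \<forall>y. f x y \<le> 0"
  defines "normuT \<equiv> Sup ((\<lambda>x. \<bar>uT x\<bar>) ` {0..1})"
    and "normf \<equiv> Sup ((\<lambda>(x, y). \<bar>f x y\<bar>) ` ({0..1} \<times> UNIV))"
    and "normm0 \<equiv> Sup ((\<lambda>x. \<bar>m0 x\<bar>) ` {0..1})"
  defines "eps \<equiv> exp (- (1 / \<sigma>\<^sup>2) * (normuT + normf * T))"
  defines "phi \<equiv> phi_seq T \<sigma> I J uT m0 f"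
    and "psi \<equiv> psi_seq T \<sigma> I J uT m0 f"
  shows
    "((\<forall>n. phi n \<in> Meps I J eps)
     \<and> (\<forall>n. \<forall>i\<le>I. \<forall>j\<le>J. phi (Suc n) i j \<le> phi n i j))
    \<and> ((\<forall>n. psi n \<in> Meps I J 0)
     \<and> (\<forall>n. \<forall>i\<le>I. \<forall>j\<le>J. psi n i j \<le> psi (Suc n) i j)
     \<and> (\<forall>n. \<forall>i\<le>I. \<forall>j\<le>J. psi n i j \<le> normm0 / eps))
    \<and> (\<exists>phiH psiH. phiH \<in> Meps I J eps \<and> psiH \<in> Meps I J 0
       \<and> (\<forall>i\<le>I. \<forall>j\<le>J. (\<lambda>n. phi n i j) \<longlonglongrightarrow> phiH i j)
       \<and> (\<forall>i\<le>I. \<forall>j\<le>J. (\<lambda>n. psi n i j) \<longlonglongrightarrow> psiH i j)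
       \<and> phi_eqs T \<sigma> I J uT f psiH phiH
       \<and> psi_eqs T \<sigma> I J m0 f phiH psiH)"
proof -
  note Tp = assms(1) and sp = assms(2) and Ip = assms(3) and Jp = assms(4)
  have f0: "\<forall>x\<in>{0..1}. \<forall>y. f x y \<le> 0" using assms(11) .
  have fm: "\<forall>x\<in>{0..1}. \<forall>y1 y2. y1 \<le> y2 \<longrightarrow> f x y2 \<le> f x y1" using assms(9) .
  have U: "\<forall>x\<in>{0..1}. \<bar>uT x\<bar> \<le> normuT"
  proof
    fix x :: real assume x: "x \<in> {0..1}"
    obtain B where B: "\<forall>y\<in>uT ` {0..1}. norm y \<le> B" using assms(5) bounded_iff by metis
    have "bdd_above ((\<lambda>x. \<bar>uT x\<bar>) ` {0..1})" using B by (intro bdd_aboveI2[where M=B]) auto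
    then show "\<bar>uT x\<bar> \<le> normuT" unfolding normuT_def using x by (rule cSUP_upper[rotated])
  qed
  have m: "\<forall>x\<in>{0..1}. 0 \<le> m0 x \<and> m0 x \<le> normm0"
  proof
    fix x :: real assume x: "x \<in> {0..1}"
    obtain B where B: "\<forall>y\<in>m0 ` {0..1}. norm y \<le> B" using assms(6) bounded_iff by metis
    have "bdd_above ((\<lambda>x. \<bar>m0 x\<bar>) ` {0..1})" using B by (intro bdd_aboveI2[where M=B]) auto
    then have "\<bar>m0 x\<bar> \<le> normm0" unfolding normm0_def using x by (rule cSUP_upper[rotated])
    then show "0 \<le> m0 x \<and> m0 x \<le> normm0" using assms(7) x by auto
  qed
  have fb: "\<forall>x\<in>{0..1}. \<forall>y. \<bar>f x y\<bar> \<le> normf"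
  proof (intro ballI allI)
    fix x y :: real assume x: "x \<in> {0..1}"
    obtain B where B: "\<forall>z\<in>(\<lambda>(x, y). f x y) ` ({0..1} \<times> UNIV). norm z \<le> B" using assms(10) bounded_iff by metis
    have "bdd_above ((\<lambda>(x, y). \<bar>f x y\<bar>) ` ({0..1} \<times> UNIV))" using B by (intro bdd_aboveI2[where M=B]) auto
    then have "(\<lambda>(x, y). \<bar>f x y\<bar>) (x, y) \<le> normf" unfolding normf_def using x by (intro cSUP_upper) auto
    then show "\<bar>f x y\<bar> \<le> normf" by simp
  qed
  have fc: "\<forall>x\<in>{0..1}. \<forall>y. isCont (f x) y"
  proof (intro ballI allI)
    fix x y :: real assume x: "x \<in> {0..1}"
    have "continuous_on UNIV (\<lambda>y. (\<lambda>(x, y). f x y) (x, y))"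
      by (rule continuous_on_compose2[OF assms(8)]) (use x in \<open>auto intro!: continuous_intros\<close>)
    then have "continuous_on UNIV (f x)" by simp
    then show "isCont (f x) y" using continuous_on_eq_continuous_at[of UNIV "f x"] by simp
  qed
  have eps0: "eps > 0" unfolding eps_def by simp
  have normm0: "normm0 \<ge> 0" using m by (meson atLeastAtMost_iff order_trans zero_le_one order_refl)
  note PhiP = PhiHat_props[OF Tp sp Ip Jp f0 fm fb fc U]
  note PsiP = PsiHat_props[OF Tp sp Ip Jp f0 fm fb fc eps0 _ m]
  note PhiE = phi_ge_eps[OF Tp sp Ip Jp f0 fm fb fc _ U]
  note PsiB = psi_bounds[OF Tp sp Ip Jp f0 fm fb fc _ eps0 _ m]
  have phiS: "phi n = PhiHat T \<sigma> I J uT f (psi n)" for n unfolding phi_def psi_def phi_seq_def ..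
  have psiS: "psi (Suc n) = PsiHat T \<sigma> I J m0 f (phi n)" for n unfolding phi_def psi_def phi_seq_def by simp
  have psi0: "psi 0 = (\<lambda>i j. 0)" unfolding psi_def by simp
  have all: "(\<forall>i\<le>I. \<forall>j\<le>J. 0 \<le> psi n i j \<and> psi n i j \<le> normm0 / eps)
     \<and> phi n \<in> mats I J \<and> phi_eqs T \<sigma> I J uT f (psi n) (phi n) \<and> (\<forall>i\<le>I. \<forall>j\<le>J. eps \<le> phi n i j)
     \<and> psi (Suc n) \<in> mats I J \<and> psi_eqs T \<sigma> I J m0 f (phi n) (psi (Suc n))
     \<and> (\<forall>i\<le>I. \<forall>j\<le>J. 0 \<le> psi (Suc n) i j \<and> psi (Suc n) i j \<le> normm0 / eps)" for n
  proof (induction n)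
    case 0
    have p: "\<forall>i\<le>I. \<forall>j\<le>J. 0 \<le> psi 0 i j \<and> psi 0 i j \<le> normm0 / eps" using psi0 normm0 eps0 by simp
    have ph: "phi 0 \<in> mats I J \<and> phi_eqs T \<sigma> I J uT f (psi 0) (phi 0)" using PhiP[of "psi 0"] p phiS by simp
    have pe: "\<forall>i\<le>I. \<forall>j\<le>J. eps \<le> phi 0 i j" using PhiE ph unfolding eps_def by blast
    have ps: "psi (Suc 0) \<in> mats I J \<and> psi_eqs T \<sigma> I J m0 f (phi 0) (psi (Suc 0))"
      using PsiP[OF pe] psiS by simp
    have pb: "\<forall>i\<le>I. \<forall>j\<le>J. 0 \<le> psi (Suc 0) i j \<and> psi (Suc 0) i j \<le> normm0 / eps" using PsiB ps pe by blast
    show ?case using p ph pe ps pb by blast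
  next
    case (Suc n)
    have p: "\<forall>i\<le>I. \<forall>j\<le>J. 0 \<le> psi (Suc n) i j \<and> psi (Suc n) i j \<le> normm0 / eps" using Suc.IH by blast
    have ph: "phi (Suc n) \<in> mats I J \<and> phi_eqs T \<sigma> I J uT f (psi (Suc n)) (phi (Suc n))" using PhiP[of "psi (Suc n)"] p phiS by simp
    have pe: "\<forall>i\<le>I. \<forall>j\<le>J. eps \<le> phi (Suc n) i j" using PhiE ph unfolding eps_def by blast
    have ps: "psi (Suc (Suc n)) \<in> mats I J \<and> psi_eqs T \<sigma> I J m0 f (phi (Suc n)) (psi (Suc (Suc n)))"
      using PsiP[OF pe] psiS by simp
    have pb: "\<forall>i\<le>I. \<forall>j\<le>J. 0 \<le> psi (Suc (Suc n)) i j \<and> psi (Suc (Suc n)) i j \<le> normm0 / eps" using PsiB ps pe by blast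
    show ?case using p ph pe ps pb by blast
  qed
  note PhiC = phi_cmp[OF Tp sp Ip Jp f0 fm fb fc]
  note PsiC = psi_cmp[OF Tp sp Ip Jp f0 fm fb fc]
  have A1: "\<forall>i\<le>I. \<forall>j\<le>J. 0 \<le> psi n i j \<and> psi n i j \<le> normm0 / eps" for n using all[of n] by blast
  have A3: "phi_eqs T \<sigma> I J uT f (psi n) (phi n)" for n using all[of n] by blast
  have A4: "\<forall>i\<le>I. \<forall>j\<le>J. eps \<le> phi n i j" for n using all[of n] by blast
  have A6: "psi_eqs T \<sigma> I J m0 f (phi n) (psi (Suc n))" for n using all[of n] by blast
  have mono: "\<forall>i\<le>I. \<forall>j\<le>J. psi n i j \<le> psi (Suc n) i j" for n
  proof (induction n)
    case 0 then show ?case using A1[of 1] psi0 by simp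
  next
    case (Suc n)
    have ps: "\<forall>i\<le>I. \<forall>j\<le>J. 0 \<le> psi n i j \<and> psi n i j \<le> psi (Suc n) i j" using Suc.IH A1[of n] by simp
    have c1: "\<forall>i\<le>I. \<forall>j\<le>J. phi (Suc n) i j \<le> phi n i j"
      by (rule PhiC[OF A3[of n] A3[of "Suc n"] U ps])
    have ph: "\<forall>i\<le>I. \<forall>j\<le>J. eps \<le> phi (Suc n) i j \<and> phi (Suc n) i j \<le> phi n i j"
      using c1 A4[of "Suc n"] by simp
    show ?case by (rule PsiC[OF A6[of n] A6[of "Suc n"] eps0 ph m])
  qed
  have phimono: "\<forall>i\<le>I. \<forall>j\<le>J. phi (Suc n) i j \<le> phi n i j" for n
  proof -
    have ps: "\<forall>i\<le>I. \<forall>j\<le>J. 0 \<le> psi n i j \<and> psi n i j \<le> psi (Suc n) i j" using mono[of n] A1[of n] by simp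
    show ?thesis by (rule PhiC[OF A3[of n] A3[of "Suc n"] U ps])
  qed
  define phiH where "phiH i j = Inf (range (\<lambda>n. phi n i j))" for i j
  define psiH where "psiH i j = Sup (range (\<lambda>n. psi n i j))" for i j
  have limphi: "(\<lambda>n. phi n i j) \<longlonglongrightarrow> phiH i j" if "i \<le> I" "j \<le> J" for i j
    unfolding phiH_def
  proof (rule LIMSEQ_decseq_INF)
    show "bdd_below (range (\<lambda>n. phi n i j))" using A4 that by (intro bdd_belowI2[where m=eps]) blast
    show "decseq (\<lambda>n. phi n i j)" using phimono that by (intro decseq_SucI) blast
  qed
  have limpsi: "(\<lambda>n. psi n i j) \<longlonglongrightarrow> psiH i j" if "i \<le> I" "j \<le> J" for i j
    unfolding psiH_def
  proof (rule LIMSEQ_incseq_SUP)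
    show "bdd_above (range (\<lambda>n. psi n i j))" using A1 that by (intro bdd_aboveI2[where M="normm0 / eps"]) blast
    show "incseq (\<lambda>n. psi n i j)" using mono that by (intro incseq_SucI) blast
  qed
  have limpsi': "(\<lambda>n. psi (Suc n) i j) \<longlonglongrightarrow> psiH i j" if "i \<le> I" "j \<le> J" for i j
    using limpsi[OF that] by (rule LIMSEQ_Suc)
  have phiHe: "\<forall>i\<le>I. \<forall>j\<le>J. eps \<le> phiH i j"
  proof (intro allI impI)
    fix i j assume ij: "i \<le> I" "j \<le> J"
    show "eps \<le> phiH i j" using limphi[OF ij] by (rule LIMSEQ_le_const) (use A4 ij in auto)
  qed
  have psiH0: "\<forall>i\<le>I. \<forall>j\<le>J. 0 \<le> psiH i j"
  proof (intro allI impI)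
    fix i j assume ij: "i \<le> I" "j \<le> J"
    show "0 \<le> psiH i j" using limpsi[OF ij] by (rule LIMSEQ_le_const) (use A1 ij in auto)
  qed
  have fcj: "isCont (f (xg J j)) y" if "j \<le> J" for j y
    using fc that Jp by (auto simp: xg_def)
  have phiHeq: "phi_eqs T \<sigma> I J uT f psiH phiH"
    unfolding phi_eqs_def
  proof (intro conjI allI impI)
    fix i j assume i: "i < I" and j: "j \<le> J"
    have iI: "i \<le> I" "Suc i \<le> I" using i by auto
    have jj: "min (j + 1) J \<le> J" "j - 1 \<le> J" using j by auto
    have E: "(phi n (i+1) j - phi n i j) / (T / real I)
        + \<sigma>\<^sup>2 / 2 * (rgt J (phi n) i j - 2 * phi n i j + lft (phi n) i j) / (1 / real J)\<^sup>2
        = - (1 / \<sigma>\<^sup>2) * f (xg J j) (phi n i j * psi n i j) * phi n i j" for n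
      using A3[of n] i j unfolding phi_eqs_def by blast
    have fl: "(\<lambda>n. f (xg J j) (phi n i j * psi n i j)) \<longlonglongrightarrow> f (xg J j) (phiH i j * psiH i j)"
      by (rule isCont_tendsto_compose[OF fcj[OF j]]) (intro tendsto_mult limphi limpsi iI j)
    have L: "(\<lambda>n. (phi n (i+1) j - phi n i j) / (T / real I)
        + \<sigma>\<^sup>2 / 2 * (rgt J (phi n) i j - 2 * phi n i j + lft (phi n) i j) / (1 / real J)\<^sup>2)
        \<longlonglongrightarrow> (phiH (i+1) j - phiH i j) / (T / real I)
        + \<sigma>\<^sup>2 / 2 * (rgt J phiH i j - 2 * phiH i j + lft phiH i j) / (1 / real J)\<^sup>2"
      unfolding rgt_def lft_def
      by (intro tendsto_add tendsto_diff tendsto_divide tendsto_mult tendsto_const limphi iI j jj) (use Tp Ip Jp iI j jj in auto)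
    have R: "(\<lambda>n. - (1 / \<sigma>\<^sup>2) * f (xg J j) (phi n i j * psi n i j) * phi n i j)
        \<longlonglongrightarrow> - (1 / \<sigma>\<^sup>2) * f (xg J j) (phiH i j * psiH i j) * phiH i j"
      by (intro tendsto_mult tendsto_const fl limphi iI j)
    show "(phiH (i+1) j - phiH i j) / (T / real I)
        + \<sigma>\<^sup>2 / 2 * (rgt J phiH i j - 2 * phiH i j + lft phiH i j) / (1 / real J)\<^sup>2
        = - (1 / \<sigma>\<^sup>2) * f (xg J j) (phiH i j * psiH i j) * phiH i j"
      using LIMSEQ_unique[OF L] R E by simp
  next
    fix j assume j: "j \<le> J"
    have "phi n I j = exp (uT (xg J j) / \<sigma>\<^sup>2)" for n using A3[of n] j unfolding phi_eqs_def by blast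
    then show "phiH I j = exp (uT (xg J j) / \<sigma>\<^sup>2)" using LIMSEQ_unique[OF limphi[OF order_refl j]] by simp
  qed
  have psiHeq: "psi_eqs T \<sigma> I J m0 f phiH psiH"
    unfolding psi_eqs_def
  proof (intro conjI allI impI)
    fix i j assume i: "i < I" and j: "j \<le> J"
    have iI: "i \<le> I" "Suc i \<le> I" using i by auto
    have jj: "min (j + 1) J \<le> J" "j - 1 \<le> J" using j by auto
    have E: "(psi (Suc n) (i+1) j - psi (Suc n) i j) / (T / real I)
        - \<sigma>\<^sup>2 / 2 * (rgt J (psi (Suc n)) (i+1) j - 2 * psi (Suc n) (i+1) j + lft (psi (Suc n)) (i+1) j) / (1 / real J)\<^sup>2
        = (1 / \<sigma>\<^sup>2) * f (xg J j) (phi n (i+1) j * psi (Suc n) (i+1) j) * psi (Suc n) (i+1) j" for n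
      using A6[of n] i j unfolding psi_eqs_def by blast
    have fl: "(\<lambda>n. f (xg J j) (phi n (i+1) j * psi (Suc n) (i+1) j)) \<longlonglongrightarrow> f (xg J j) (phiH (i+1) j * psiH (i+1) j)"
      by (rule isCont_tendsto_compose[OF fcj[OF j]]) (use iI j in \<open>simp add: tendsto_mult limphi limpsi'\<close>)
    have L: "(\<lambda>n. (psi (Suc n) (i+1) j - psi (Suc n) i j) / (T / real I)
        - \<sigma>\<^sup>2 / 2 * (rgt J (psi (Suc n)) (i+1) j - 2 * psi (Suc n) (i+1) j + lft (psi (Suc n)) (i+1) j) / (1 / real J)\<^sup>2)
        \<longlonglongrightarrow> (psiH (i+1) j - psiH i j) / (T / real I)
        - \<sigma>\<^sup>2 / 2 * (rgt J psiH (i+1) j - 2 * psiH (i+1) j + lft psiH (i+1) j) / (1 / real J)\<^sup>2"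
      unfolding rgt_def lft_def
      by (intro tendsto_add tendsto_diff tendsto_divide tendsto_mult tendsto_const limpsi') (use Tp Ip Jp iI j jj in auto)
    have R: "(\<lambda>n. (1 / \<sigma>\<^sup>2) * f (xg J j) (phi n (i+1) j * psi (Suc n) (i+1) j) * psi (Suc n) (i+1) j)
        \<longlonglongrightarrow> (1 / \<sigma>\<^sup>2) * f (xg J j) (phiH (i+1) j * psiH (i+1) j) * psiH (i+1) j"
      by (intro tendsto_mult tendsto_const fl limpsi') (use iI j in auto)
    show "(psiH (i+1) j - psiH i j) / (T / real I)
        - \<sigma>\<^sup>2 / 2 * (rgt J psiH (i+1) j - 2 * psiH (i+1) j + lft psiH (i+1) j) / (1 / real J)\<^sup>2
        = (1 / \<sigma>\<^sup>2) * f (xg J j) (phiH (i+1) j * psiH (i+1) j) * psiH (i+1) j"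
      using LIMSEQ_unique[OF L] R E by simp
  next
    fix j assume j: "j \<le> J"
    have E: "psi (Suc n) 0 j = m0 (xg J j) / phi n 0 j" for n using A6[of n] j unfolding psi_eqs_def by blast
    have ne: "phiH 0 j \<noteq> 0" using phiHe j eps0 by force
    have "(\<lambda>n. m0 (xg J j) / phi n 0 j) \<longlonglongrightarrow> m0 (xg J j) / phiH 0 j"
      by (intro tendsto_divide tendsto_const limphi ne) (use j in auto)
    then show "psiH 0 j = m0 (xg J j) / phiH 0 j" using LIMSEQ_unique[OF limpsi'[OF _ j]] E by simp
  qed
  show ?thesis
  proof (intro conjI)
    show "\<forall>n. phi n \<in> Meps I J eps" using A4 unfolding Meps_def by blast
    show "\<forall>n. \<forall>i\<le>I. \<forall>j\<le>J. phi (Suc n) i j \<le> phi n i j" using phimono by blast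
    show "\<forall>n. psi n \<in> Meps I J 0" using A1 unfolding Meps_def by blast
    show "\<forall>n. \<forall>i\<le>I. \<forall>j\<le>J. psi n i j \<le> psi (Suc n) i j" using mono by blast
    show "\<forall>n. \<forall>i\<le>I. \<forall>j\<le>J. psi n i j \<le> normm0 / eps" using A1 by blast
    show "\<exists>phiH psiH. phiH \<in> Meps I J eps \<and> psiH \<in> Meps I J 0
       \<and> (\<forall>i\<le>I. \<forall>j\<le>J. (\<lambda>n. phi n i j) \<longlonglongrightarrow> phiH i j)
       \<and> (\<forall>i\<le>I. \<forall>j\<le>J. (\<lambda>n. psi n i j) \<longlonglongrightarrow> psiH i j)
       \<and> phi_eqs T \<sigma> I J uT f psiH phiH
       \<and> psi_eqs T \<sigma> I J m0 f phiH psiH"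
      using phiHe psiH0 limphi limpsi phiHeq psiHeq unfolding Meps_def by blast
  qed
qed

end
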